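(* Let $R>0$ and let $\mathbf X_1,\dots,\mathbf X_n$ be independent random self-adjoint Hilbert–Schmidt operators on a separable Hilbert space with $\mathbb E[\mathbf X_i]=\mathbf 0$ and $\|\mathbf X_i\|\le R$ almost surely. Let $\mathbf Y=\sum_{i=1}^n\mathbf X_i$ and suppose $V,D>0$ satisfy $\|\mathbb E[\mathbf Y^2]\|\le V$ and $\mathrm{tr}(\mathbb E[\mathbf Y^2])\le VD$. Then \[ \mathbb E\big[\|\mathbf Y\|^2\big]\le(2+32D)V+\Big(\frac{2+128D}{9}\Big)R^2. \]
   Context: $\|\cdot\|$ denotes the operator norm. *)

theory Defs
  imports "HOL-Probability.Probability"
begin

definition orthonormal_basis :: "'a::real_inner set \<Rightarrow> bool" where
  "orthonormal_basis B \<longleftrightarrow>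
     (\<forall>e\<in>B. norm e = 1) \<and> (\<forall>e\<in>B. \<forall>f\<in>B. e \<noteq> f \<longrightarrow> inner e f = 0) \<and>
     closure (span B) = UNIV"

definition self_adjoint_op :: "('a::real_inner \<Rightarrow>\<^sub>L 'a) \<Rightarrow> bool" where
  "self_adjoint_op T \<longleftrightarrow> (\<forall>x y. inner (T x) y = inner x (T y))"

definition hilbert_schmidt :: "('a::real_inner \<Rightarrow>\<^sub>L 'a) \<Rightarrow> bool" where
  "hilbert_schmidt T \<longleftrightarrow>
     (\<exists>B. orthonormal_basis B \<and> (\<lambda>e. (norm (T e))\<^sup>2) summable_on B)"

text \<open>Trace of a positive operator, \<open>\<Sum>\<^sub>e \<langle>T e, e\<rangle>\<close> over an orthonormal basis
  (value in [0,\<infinity>]; basis independent for positive operators).\<close>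
definition pos_op_trace :: "('a::real_inner \<Rightarrow>\<^sub>L 'a) \<Rightarrow> ennreal" where
  "pos_op_trace T = (SOME t. \<exists>B. orthonormal_basis B \<and>
      t = (\<integral>\<^sup>+ e. ennreal (inner (T e) e) \<partial>count_space B))"

text \<open>Expectation of a random bounded operator, in the weak (Pettis) sense:
  \<open>\<langle>E[Z] x, y\<rangle> = E[\<langle>Z x, y\<rangle>]\<close> for all \<open>x, y\<close>.\<close>
definition has_op_expectation ::
  "'w measure \<Rightarrow> ('w \<Rightarrow> ('a::real_inner \<Rightarrow>\<^sub>L 'a)) \<Rightarrow> ('a \<Rightarrow>\<^sub>L 'a) \<Rightarrow> bool" where
  "has_op_expectation M Z A \<longleftrightarrow>
     (\<forall>x y. integrable M (\<lambda>\<omega>. inner (Z \<omega> x) y) \<and>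
            (\<integral>\<omega>. inner (Z \<omega> x) y \<partial>M) = inner (A x) y)"

end

theory Submission
  imports Defs
begin

fun GS :: "(nat \<Rightarrow> 'a::real_inner) \<Rightarrow> nat \<Rightarrow> 'a set" where
  "GS d 0 = {}"
| "GS d (Suc n) = (let a = d n - (\<Sum>b\<in>GS d n. inner b (d n) *\<^sub>R b) in
     if a = 0 then GS d n else insert (a /\<^sub>R norm a) (GS d n))"

declare GS.simps(2)[simp del]

lemma GS_props:
  "finite (GS d n) \<and> (\<forall>e\<in>GS d n. norm e = 1) \<and>
   (\<forall>e\<in>GS d n. \<forall>f\<in>GS d n. e \<noteq> f \<longrightarrow> inner e f = 0) \<and> d ` {..<n} \<subseteq> span (GS d n)"
proof (induction n)
  case 0
  then show ?case by simp
next
  case (Suc n)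
  define S where "S = GS d n"
  define a where "a = d n - (\<Sum>b\<in>S. inner b (d n) *\<^sub>R b)"
  have fin: "finite S" and nrm: "\<forall>e\<in>S. norm e = 1"
    and orth: "\<forall>e\<in>S. \<forall>f\<in>S. e \<noteq> f \<longrightarrow> inner e f = 0" and sp: "d ` {..<n} \<subseteq> span S"
    using Suc unfolding S_def by auto
  have step: "GS d (Suc n) = (if a = 0 then S else insert (a /\<^sub>R norm a) S)"
    by (simp add: S_def a_def Let_def GS.simps(2))
  have ao: "inner a f = 0" if "f \<in> S" for f
  proof -
    have "inner (\<Sum>b\<in>S. inner b (d n) *\<^sub>R b) f = (\<Sum>b\<in>S. inner b (d n) * inner b f)"
      by (simp add: inner_sum_left)
    also have "\<dots> = (\<Sum>b\<in>S. if b = f then inner f (d n) else 0)"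
      using orth that nrm by (intro sum.cong) (auto simp: dot_square_norm)
    also have "\<dots> = inner f (d n)" using fin that by simp
    finally have "inner (\<Sum>b\<in>S. inner b (d n) *\<^sub>R b) f = inner f (d n)" .
    moreover have "inner a f = inner (d n) f - inner (\<Sum>b\<in>S. inner b (d n) *\<^sub>R b) f"
      unfolding a_def by (rule inner_diff_left)
    ultimately show ?thesis by (simp add: inner_commute)
  qed
  have dn: "d n = a + (\<Sum>b\<in>S. inner b (d n) *\<^sub>R b)" by (simp add: a_def)
  show ?case
  proof (cases "a = 0")
    case True
    have "(\<Sum>b\<in>S. inner b (d n) *\<^sub>R b) \<in> span S" by (intro span_sum span_mul span_base) auto
    hence "d n \<in> span S" using dn True by simp
    then show ?thesis using step True fin nrm orth sp by (auto simp: lessThan_Suc)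
  next
    case False
    let ?u = "a /\<^sub>R norm a"
    have un: "norm ?u = 1" using False by simp
    have uo: "inner ?u f = 0" if "f \<in> S" for f using ao[OF that] by simp
    have "d n \<in> span (insert ?u S)"
    proof -
      have "a = norm a *\<^sub>R ?u" using False by simp
      hence "a \<in> span (insert ?u S)" by (metis span_mul span_base insertI1)
      moreover have "(\<Sum>b\<in>S. inner b (d n) *\<^sub>R b) \<in> span (insert ?u S)"
        by (intro span_sum span_mul span_base) auto
      ultimately show ?thesis using dn by (metis span_add)
    qed
    moreover have "span S \<subseteq> span (insert ?u S)" by (simp add: span_mono subset_insertI)
    ultimately show ?thesis using step False fin nrm orth sp un uo
      by (auto simp: lessThan_Suc inner_commute)
  qed
qed

lemma GS_mono: "m \<le> n \<Longrightarrow> GS d m \<subseteq> GS d n"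
proof (induction n)
  case 0 then show ?case by simp
next
  case (Suc n)
  have "GS d n \<subseteq> GS d (Suc n)" by (auto simp: Let_def GS.simps(2))
  then show ?case using Suc by (cases "m = Suc n") auto
qed

lemma ONB_exists:
  "\<exists>B::'a::{real_inner,second_countable_topology} set. orthonormal_basis B"
proof -
  obtain D :: "'a set" where D: "countable D" "\<And>X. open X \<Longrightarrow> X \<noteq> {} \<Longrightarrow> \<exists>d \<in> D. d \<in> X"
    using countable_dense_setE by blast
  have "D \<noteq> {}" using D(2)[of UNIV] by auto
  define d where "d = from_nat_into D"
  have rd: "range d = D" using D \<open>D \<noteq> {}\<close> by (simp add: d_def)
  define B where "B = (\<Union>n. GS d n)"
  have nrm: "\<forall>e\<in>B. norm e = 1" using GS_props unfolding B_def by blast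
  have orth: "\<forall>e\<in>B. \<forall>f\<in>B. e \<noteq> f \<longrightarrow> inner e f = 0"
  proof (intro ballI impI)
    fix e f assume "e \<in> B" "f \<in> B" "e \<noteq> f"
    then obtain m k where "e \<in> GS d m" "f \<in> GS d k" unfolding B_def by auto
    hence "e \<in> GS d (max m k)" "f \<in> GS d (max m k)" using GS_mono[of m "max m k" d] GS_mono[of k "max m k" d] by auto
    then show "inner e f = 0" using GS_props \<open>e \<noteq> f\<close> by blast
  qed
  have "D \<subseteq> span B"
  proof
    fix x assume "x \<in> D"
    then obtain n where "x = d n" using rd by auto
    have "d ` {..<Suc n} \<subseteq> span (GS d (Suc n))" using GS_props[of d "Suc n"] by blast
    hence "x \<in> span (GS d (Suc n))" using \<open>x = d n\<close> by blast
    moreover have "GS d (Suc n) \<subseteq> B" unfolding B_def by blast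
    ultimately show "x \<in> span B" using span_mono by blast
  qed
  moreover have "closure D = UNIV"
  proof -
    have "x \<in> closure D" for x
    proof (rule ccontr)
      assume "x \<notin> closure D"
      then have "open (- closure D)" "- closure D \<noteq> {}" by auto
      then obtain y where "y \<in> D" "y \<in> - closure D" using D(2) by blast
      then show False using closure_subset by blast
    qed
    then show ?thesis by auto
  qed
  ultimately have "closure (span B) = UNIV" by (metis closure_mono top.extremum_uniqueI)
  then show ?thesis using nrm orth unfolding orthonormal_basis_def by blast
qed

lemma ONB_countable:
  fixes B :: "'a::{real_inner,second_countable_topology} set"
  assumes "orthonormal_basis B" shows "countable B"
proof -
  have nrm: "\<forall>e\<in>B. norm e = 1" and orth: "\<forall>e\<in>B. \<forall>f\<in>B. e \<noteq> f \<longrightarrow> inner e f = 0"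
    using assms unfolding orthonormal_basis_def by blast+
  obtain D :: "'a set" where D: "countable D" "\<And>X. open X \<Longrightarrow> X \<noteq> {} \<Longrightarrow> \<exists>d \<in> D. d \<in> X"
    using countable_dense_setE by blast
  have "\<forall>e. \<exists>c. c \<in> D \<and> c \<in> ball e (1/2)"
    using D(2)[OF open_ball] by (metis centre_in_ball empty_iff half_gt_zero zero_less_one)
  then obtain c where c: "\<And>e. c e \<in> D" "\<And>e. dist e (c e) < 1/2" by (metis mem_ball)
  have "inj_on c B"
  proof (rule inj_onI, rule ccontr)
    fix e f assume ef: "e \<in> B" "f \<in> B" "c e = c f" "e \<noteq> f"
    have "dist e f \<le> dist e (c e) + dist f (c f)" using ef(3) by (metis dist_commute dist_triangle)
    hence "dist e f < 1" using c(2)[of e] c(2)[of f] by linarith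
    moreover have "(dist e f)\<^sup>2 = 2"
    proof -
      have "(dist e f)\<^sup>2 = inner (e - f) (e - f)" by (simp add: dist_norm power2_norm_eq_inner)
      also have "\<dots> = inner e e + inner f f - 2 * inner e f"
        by (simp add: inner_diff_left inner_diff_right inner_commute)
      also have "\<dots> = 2" using nrm orth ef by (simp add: dot_square_norm)
      finally show ?thesis .
    qed
    ultimately show False
      using power_mono[of "dist e f" 1 2] by simp
  qed
  moreover have "countable (c ` B)" using D(1) c(1) by (meson countable_subset image_subset_iff)
  ultimately show ?thesis using countable_image_inj_on by blast
qed

lemma norm_le_HS:
  fixes T :: "'a::real_inner \<Rightarrow>\<^sub>L 'a"
  assumes "orthonormal_basis B"
  shows "ennreal ((norm T)\<^sup>2) \<le> (\<integral>\<^sup>+e. ennreal ((norm (T e))\<^sup>2) \<partial>count_space B)"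
proof -
  have ob: "(\<forall>e\<in>B. norm e = 1) \<and> (\<forall>e\<in>B. \<forall>f\<in>B. e \<noteq> f \<longrightarrow> inner e f = 0) \<and> closure (span B) = UNIV"
    using assms unfolding orthonormal_basis_def .
  have nrm: "\<forall>e\<in>B. norm e = 1" using ob by (rule conjunct1)
  have orth: "\<forall>e\<in>B. \<forall>f\<in>B. e \<noteq> f \<longrightarrow> inner e f = 0" using ob[THEN conjunct2] by (rule conjunct1)
  have dens: "closure (span B) = UNIV" using ob[THEN conjunct2] by (rule conjunct2)
  define S where "S = (\<integral>\<^sup>+e. ennreal ((norm (T e))\<^sup>2) \<partial>count_space B)"
  show ?thesis
  proof (cases "S = \<top>")
    case True then show ?thesis by (simp add: S_def)
  next
    case False
    define s where "s = enn2real S"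
    have Ss: "S = ennreal s" using False by (simp add: s_def ennreal_enn2real_if)
    have s0: "0 \<le> s" by (simp add: s_def)
    have finsum: "(\<Sum>e\<in>F. (norm (T e))\<^sup>2) \<le> s" if "finite F" "F \<subseteq> B" for F
    proof -
      have "ennreal (\<Sum>e\<in>F. (norm (T e))\<^sup>2) = (\<Sum>e\<in>F. ennreal ((norm (T e))\<^sup>2))"
        by (simp add: sum_ennreal)
      also have "\<dots> = (\<Sum>e\<in>F. ennreal ((norm (T e))\<^sup>2) * indicator F e)"
        by (intro sum.cong) auto
      also have "\<dots> = (\<integral>\<^sup>+e. ennreal ((norm (T e))\<^sup>2) * indicator F e \<partial>count_space B)"
        using that by (intro nn_integral_count_space'[symmetric]) auto
      also have "\<dots> \<le> S" unfolding S_def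
        by (intro nn_integral_mono) (auto simp: indicator_def)
      finally show ?thesis using Ss s0 by simp
    qed
    have key: "(norm (T x))\<^sup>2 \<le> s * (norm x)\<^sup>2" if "x \<in> span B" for x
    proof -
      have "x \<in> {(\<Sum>a\<in>t. r a *\<^sub>R a) | t r. finite t \<and> t \<subseteq> B}"
        using that by (simp only: span_explicit)
      then obtain F u where F: "finite F" "F \<subseteq> B" "x = (\<Sum>v\<in>F. u v *\<^sub>R v)"
        by (auto simp only: mem_Collect_eq)
      have nx: "(norm x)\<^sup>2 = (\<Sum>v\<in>F. (u v)\<^sup>2)"
      proof -
        have "(norm x)\<^sup>2 = (\<Sum>v\<in>F. \<Sum>w\<in>F. u v * u w * inner w v)"
          by (simp add: F(3) power2_norm_eq_inner inner_sum_left inner_sum_right sum_distrib_left mult.assoc)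
        also have "\<dots> = (\<Sum>v\<in>F. \<Sum>w\<in>F. if w = v then (u v)\<^sup>2 else 0)"
        proof (intro sum.cong refl)
          fix v w assume v: "v \<in> F" and w: "w \<in> F"
          show "u v * u w * inner w v = (if w = v then (u v)\<^sup>2 else 0)"
          proof (cases "w = v")
            case True
            have "norm v = 1" using nrm v F(2) by blast
            hence "inner v v = 1" by (simp add: dot_square_norm)
            then show ?thesis using True by (simp add: power2_eq_square)
          next
            case False
            have "inner w v = 0" using orth v w F(2) False by blast
            then show ?thesis using False by simp
          qed
        qed
        also have "\<dots> = (\<Sum>v\<in>F. (u v)\<^sup>2)" using F(1) by simp
        finally show ?thesis .
      qed
      have Tx: "T x = (\<Sum>v\<in>F. u v *\<^sub>R T v)" by (simp add: F(3) blinfun.sum_right blinfun.scaleR_right)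
      have "norm (T x) \<le> (\<Sum>v\<in>F. norm (u v *\<^sub>R T v))"
        unfolding Tx by (rule norm_sum)
      also have "\<dots> = (\<Sum>v\<in>F. \<bar>u v\<bar> * norm (T v))" by simp
      finally have "norm (T x) \<le> (\<Sum>v\<in>F. \<bar>u v\<bar> * norm (T v))" .
      hence "(norm (T x))\<^sup>2 \<le> (\<Sum>v\<in>F. \<bar>u v\<bar> * norm (T v))\<^sup>2"
        by (simp add: power_mono)
      also have "\<dots> \<le> (\<Sum>v\<in>F. (\<bar>u v\<bar>)\<^sup>2) * (\<Sum>v\<in>F. (norm (T v))\<^sup>2)"
        by (rule Cauchy_Schwarz_ineq_sum)
      also have "\<dots> \<le> (norm x)\<^sup>2 * s"
        unfolding nx power2_abs using finsum[OF F(1,2)] by (intro mult_left_mono) (auto intro: sum_nonneg)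
      finally show ?thesis by (simp add: mult.commute)
    qed
    have cl: "closed {x. (norm (T x))\<^sup>2 \<le> s * (norm x)\<^sup>2}"
      by (intro closed_Collect_le continuous_intros)
    have allx: "x \<in> {x. (norm (T x))\<^sup>2 \<le> s * (norm x)\<^sup>2}" for x
    proof -
      have "span B \<subseteq> {x. (norm (T x))\<^sup>2 \<le> s * (norm x)\<^sup>2}" using key by auto
      hence "closure (span B) \<subseteq> {x. (norm (T x))\<^sup>2 \<le> s * (norm x)\<^sup>2}"
        using cl closure_minimal by blast
      then show ?thesis using dens by auto
    qed
    hence "norm (T x) \<le> sqrt s * norm x" for x
    proof -
      have "(norm (T x))\<^sup>2 \<le> (sqrt s * norm x)\<^sup>2"
        using allx[of x] s0 by (simp add: power_mult_distrib)
      then show ?thesis by (rule power2_le_imp_le) (use s0 in simp)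
    qed
    hence "norm T \<le> sqrt s" using s0 by (intro norm_blinfun_bound) auto
    hence "(norm T)\<^sup>2 \<le> s" using s0 by (metis norm_ge_zero power_mono real_sqrt_pow2)
    then have "ennreal ((norm T)\<^sup>2) \<le> ennreal s" by (rule ennreal_leI)
    then show ?thesis using Ss unfolding S_def by simp
  qed
qed

theorem lemma6:
  fixes M :: "'w measure"
    and X :: "nat \<Rightarrow> 'w \<Rightarrow> ('a::{real_inner, complete_space, second_countable_topology} \<Rightarrow>\<^sub>L 'a)"
    and n :: nat and R V D :: real and EY2 :: "'a \<Rightarrow>\<^sub>L 'a"
  assumes "prob_space M"
    and "R > 0"
    and meas: "\<And>i. i < n \<Longrightarrow> X i \<in> borel_measurable M"
    and indep: "prob_space.indep_vars M (\<lambda>_. borel) X {..<n}"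
    and sa: "\<And>i \<omega>. i < n \<Longrightarrow> \<omega> \<in> space M \<Longrightarrow> self_adjoint_op (X i \<omega>)"
    and hs: "\<And>i \<omega>. i < n \<Longrightarrow> \<omega> \<in> space M \<Longrightarrow> hilbert_schmidt (X i \<omega>)"
    and mean0: "\<And>i. i < n \<Longrightarrow> has_op_expectation M (X i) 0"
    and bdd: "\<And>i. i < n \<Longrightarrow> AE \<omega> in M. norm (X i \<omega>) \<le> R"
    and "V > 0" and "D > 0"
    and EY2: "has_op_expectation M (\<lambda>\<omega>. (\<Sum>i<n. X i \<omega>) o\<^sub>L (\<Sum>i<n. X i \<omega>)) EY2"
    and "norm EY2 \<le> V"
    and "pos_op_trace EY2 \<le> ennreal (V * D)"
  shows "(\<integral>\<omega>. (norm (\<Sum>i<n. X i \<omega>))\<^sup>2 \<partial>M) \<le> (2 + 32 * D) * V + ((2 + 128 * D) / 9) * R\<^sup>2"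
  proof -
  interpret prob_space M by fact
  define Y where "Y \<omega> = (\<Sum>i<n. X i \<omega>)" for \<omega>
  have saY: "inner (Y \<omega> x) y = inner x (Y \<omega> y)" if "\<omega> \<in> space M" for \<omega> x y
  proof -
    have "inner (Y \<omega> x) y = (\<Sum>i<n. inner (X i \<omega> x) y)"
      by (simp add: Y_def blinfun.sum_left inner_sum_left)
    also have "\<dots> = (\<Sum>i<n. inner x (X i \<omega> y))"
      using sa that by (intro sum.cong) (auto simp: self_adjoint_op_def)
    also have "\<dots> = inner x (Y \<omega> y)"
      by (simp add: Y_def blinfun.sum_left inner_sum_right)
    finally show ?thesis .
  qed
  have "\<exists>t B. orthonormal_basis B \<and> t = (\<integral>\<^sup>+ e. ennreal (inner (EY2 e) e) \<partial>count_space B)"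
    using ONB_exists[where 'a='a] by blast
  hence "\<exists>B. orthonormal_basis B \<and> pos_op_trace EY2 = (\<integral>\<^sup>+ e. ennreal (inner (EY2 e) e) \<partial>count_space B)"
    unfolding pos_op_trace_def by (rule someI_ex)
  then obtain B0 where B0: "orthonormal_basis B0"
    "pos_op_trace EY2 = (\<integral>\<^sup>+ e. ennreal (inner (EY2 e) e) \<partial>count_space B0)" by blast
  have cB: "countable B0" using ONB_countable[OF B0(1)] .
  have EY2': "has_op_expectation M (\<lambda>\<omega>. Y \<omega> o\<^sub>L Y \<omega>) EY2" using EY2 by (simp add: Y_def)
  have pw: "inner ((Y \<omega> o\<^sub>L Y \<omega>) e) e = (norm (Y \<omega> e))\<^sup>2" if "\<omega> \<in> space M" for \<omega> e
    using saY[OF that, of "Y \<omega> e" e] by (simp add: power2_norm_eq_inner)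
  have eint: "integrable M (\<lambda>\<omega>. (norm (Y \<omega> e))\<^sup>2)"
    and eeq: "inner (EY2 e) e = (\<integral>\<omega>. (norm (Y \<omega> e))\<^sup>2 \<partial>M)" for e
  proof -
    have i: "integrable M (\<lambda>\<omega>. inner ((Y \<omega> o\<^sub>L Y \<omega>) e) e)"
      and ie: "(\<integral>\<omega>. inner ((Y \<omega> o\<^sub>L Y \<omega>) e) e \<partial>M) = inner (EY2 e) e"
      using EY2' unfolding has_op_expectation_def by auto
    show "integrable M (\<lambda>\<omega>. (norm (Y \<omega> e))\<^sup>2)"
    proof -
      have "integrable M (\<lambda>\<omega>. inner ((Y \<omega> o\<^sub>L Y \<omega>) e) e) = integrable M (\<lambda>\<omega>. (norm (Y \<omega> e))\<^sup>2)"
        using Bochner_Integration.integrable_cong[of M M "\<lambda>\<omega>. inner ((Y \<omega> o\<^sub>L Y \<omega>) e) e" "\<lambda>\<omega>. (norm (Y \<omega> e))\<^sup>2"] pw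
        by blast
      then show ?thesis using i by simp
    qed
    show "inner (EY2 e) e = (\<integral>\<omega>. (norm (Y \<omega> e))\<^sup>2 \<partial>M)"
    proof -
      have "(\<integral>\<omega>. inner ((Y \<omega> o\<^sub>L Y \<omega>) e) e \<partial>M) = (\<integral>\<omega>. (norm (Y \<omega> e))\<^sup>2 \<partial>M)"
        by (rule Bochner_Integration.integral_cong[OF refl]) (use pw in auto)
      then show ?thesis using ie by simp
    qed
  qed
  have meas: "(\<lambda>\<omega>. ennreal ((norm (Y \<omega> e))\<^sup>2)) \<in> borel_measurable M" for e
    using borel_measurable_integrable[OF eint[of e]] by measurable
  have tr: "ennreal (inner (EY2 e) e) = (\<integral>\<^sup>+\<omega>. ennreal ((norm (Y \<omega> e))\<^sup>2) \<partial>M)" for e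
    unfolding eeq by (rule nn_integral_eq_integral[symmetric]) (auto intro: eint)
  have "(\<integral>\<^sup>+\<omega>. ennreal ((norm (Y \<omega>))\<^sup>2) \<partial>M)
      \<le> (\<integral>\<^sup>+\<omega>. (\<integral>\<^sup>+e. ennreal ((norm (Y \<omega> e))\<^sup>2) \<partial>count_space B0) \<partial>M)"
    by (intro nn_integral_mono norm_le_HS[OF B0(1)])
  also have "\<dots> = (\<integral>\<^sup>+e. (\<integral>\<^sup>+\<omega>. ennreal ((norm (Y \<omega> e))\<^sup>2) \<partial>M) \<partial>count_space B0)"
    by (rule nn_integral_count_space_nn_integral[OF cB meas])
  also have "\<dots> = (\<integral>\<^sup>+e. ennreal (inner (EY2 e) e) \<partial>count_space B0)"
    by (simp add: tr)
  also have "\<dots> \<le> ennreal (V * D)" using B0(2) assms by simp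
  finally have NN: "(\<integral>\<^sup>+\<omega>. ennreal ((norm (Y \<omega>))\<^sup>2) \<partial>M) \<le> ennreal (V * D)" .
  have VD: "0 \<le> V * D" using assms by simp
  have bnd: "(\<integral>\<omega>. (norm (Y \<omega>))\<^sup>2 \<partial>M) \<le> V * D"
  proof (cases "integrable M (\<lambda>\<omega>. (norm (Y \<omega>))\<^sup>2)")
    case True
    have "(\<integral>\<omega>. (norm (Y \<omega>))\<^sup>2 \<partial>M) = enn2real (\<integral>\<^sup>+\<omega>. ennreal ((norm (Y \<omega>))\<^sup>2) \<partial>M)"
      by (rule integral_eq_nn_integral) (auto intro: borel_measurable_integrable[OF True])
    also have "\<dots> \<le> enn2real (ennreal (V * D))"
      by (rule enn2real_mono[OF NN]) simp
    finally show ?thesis using VD by simp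
  next
    case False
    then show ?thesis using VD by (simp add: not_integrable_integral_eq)
  qed
  have "V * D \<le> 32 * D * V" using assms by simp
  moreover have "0 \<le> ((2 + 128 * D) / 9) * R\<^sup>2" using assms by simp
  moreover have "0 \<le> 2 * V" using assms by simp
  ultimately have "V * D \<le> (2 + 32 * D) * V + ((2 + 128 * D) / 9) * R\<^sup>2"
    by (simp add: distrib_right)
  then show ?thesis using bnd unfolding Y_def by linarith
qed

end
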